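(* Let $\mathcal{S}$ be a finite elation generalized quadrangle of order $(s,t)$ with elation group $G$ and associated $4$-gonal family $(G,\{A_i\}_{i=0}^t,\{A_i^*\}_{i=0}^t)$, and let $\Delta:=\sum_{i=0}^t (A_i\setminus\{1\})$, $\Delta^*:=\sum_{i=0}^t (A_i^*\setminus\{1\})$ in $\mathbb{R}[G]$. Let $\chi$ be a nonprincipal linear character of $G$, extended linearly to a ring homomorphism $\mathbb{R}[G]\to\mathbb{C}$, and let $u$ and $u'$ be the numbers of indices $i$ with $A_i\le\ker(\chi)$ and with $A_i^*\le \ker(\chi)$ respectively. Then \[\chi(\Delta)=su-t-1,\qquad \chi(\Delta^* )=stu'-t-1,\] and $(u,u')$ is one of $(1,1)$, $(0,0)$, $(\tfrac{t}{s}+1,0)$.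
   Context: A generalized quadrangle of order $(s,t)$: each line has $s+1$ points, each point is on $t+1$ lines, and for each non-incident point-line pair $(P,\ell)$ there is a unique point on $\ell$ collinear with $P$. An elation about $P$ is an automorphism that is the identity or fixes each line through $P$ and no point not collinear with $P$. $\mathcal{S}$ is an elation generalized quadrangle with base point $P$ and elation group $G$ if $G$ consists of elations about $P$ and acts regularly on the points not collinear with $P$. The associated $4$-gonal family: fix a point $y$ not collinear with $P$, let $M_0,\dots,M_t$ be the lines through $y$, let $z_i$ be the unique point of $M_i$ collinear with $P$, and let $A_i$, $A_i^*$ be the stabilizers in $G$ of $M_i$ and $z_i$ respectively. In $\mathbb{R}[G]$ a subset is identified with the sum of its elements. $\ker(\chi)=\{g:\chi(g)=\chi(1)\}$. *)

theory Defs
  imports Complex_Main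
begin

type_synonym ('p,'l) aut = "('p \<Rightarrow> 'p) \<times> ('l \<Rightarrow> 'l)"

definition collinear :: "('p \<Rightarrow> 'l \<Rightarrow> bool) \<Rightarrow> 'l set \<Rightarrow> 'p \<Rightarrow> 'p \<Rightarrow> bool" where
  "collinear I Lns x y \<longleftrightarrow> (\<exists>l\<in>Lns. I x l \<and> I y l)"

definition GQ :: "'p set \<Rightarrow> 'l set \<Rightarrow> ('p \<Rightarrow> 'l \<Rightarrow> bool) \<Rightarrow> nat \<Rightarrow> nat \<Rightarrow> bool" where
  "GQ Pts Lns I s t \<longleftrightarrow>
     s \<ge> 1 \<and> t \<ge> 1 \<and>
     (\<forall>l\<in>Lns. card {x\<in>Pts. I x l} = s + 1) \<and>
     (\<forall>x\<in>Pts. card {l\<in>Lns. I x l} = t + 1) \<and>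
     (\<forall>x\<in>Pts. \<forall>y\<in>Pts. \<forall>l\<in>Lns. \<forall>m\<in>Lns.
         x \<noteq> y \<and> I x l \<and> I y l \<and> I x m \<and> I y m \<longrightarrow> l = m) \<and>
     (\<forall>x\<in>Pts. \<forall>l\<in>Lns. \<not> I x l \<longrightarrow>
         (\<exists>!z. z \<in> Pts \<and> I z l \<and> collinear I Lns x z))"

definition automorphism :: "'p set \<Rightarrow> 'l set \<Rightarrow> ('p \<Rightarrow> 'l \<Rightarrow> bool) \<Rightarrow> ('p,'l) aut \<Rightarrow> bool" where
  "automorphism Pts Lns I \<phi> \<longleftrightarrow>
     bij_betw (fst \<phi>) Pts Pts \<and> bij_betw (snd \<phi>) Lns Lns \<and>
     (\<forall>x\<in>Pts. \<forall>l\<in>Lns. I (fst \<phi> x) (snd \<phi> l) \<longleftrightarrow> I x l) \<and>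
     (\<forall>x. x \<notin> Pts \<longrightarrow> fst \<phi> x = x) \<and> (\<forall>l. l \<notin> Lns \<longrightarrow> snd \<phi> l = l)"

definition aut_one :: "('p,'l) aut" where
  "aut_one = (id, id)"

definition aut_mult :: "('p,'l) aut \<Rightarrow> ('p,'l) aut \<Rightarrow> ('p,'l) aut" where
  "aut_mult a b = (fst a \<circ> fst b, snd a \<circ> snd b)"

definition aut_group :: "'p set \<Rightarrow> 'l set \<Rightarrow> ('p \<Rightarrow> 'l \<Rightarrow> bool) \<Rightarrow> ('p,'l) aut set \<Rightarrow> bool" where
  "aut_group Pts Lns I G \<longleftrightarrow>
     (\<forall>\<phi>\<in>G. automorphism Pts Lns I \<phi>) \<and> aut_one \<in> G \<and>
     (\<forall>a\<in>G. \<forall>b\<in>G. aut_mult a b \<in> G) \<and>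
     (\<forall>a\<in>G. \<exists>b\<in>G. aut_mult a b = aut_one \<and> aut_mult b a = aut_one)"

definition elation :: "'p set \<Rightarrow> 'l set \<Rightarrow> ('p \<Rightarrow> 'l \<Rightarrow> bool) \<Rightarrow> 'p \<Rightarrow> ('p,'l) aut \<Rightarrow> bool" where
  "elation Pts Lns I P \<phi> \<longleftrightarrow>
     automorphism Pts Lns I \<phi> \<and>
     (\<phi> = aut_one \<or>
      ((\<forall>l\<in>Lns. I P l \<longrightarrow> snd \<phi> l = l) \<and>
       (\<forall>x\<in>Pts. \<not> collinear I Lns P x \<longrightarrow> fst \<phi> x \<noteq> x)))"

definition elation_GQ :: "'p set \<Rightarrow> 'l set \<Rightarrow> ('p \<Rightarrow> 'l \<Rightarrow> bool) \<Rightarrow> nat \<Rightarrow> nat \<Rightarrow> 'p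
    \<Rightarrow> ('p,'l) aut set \<Rightarrow> bool" where
  "elation_GQ Pts Lns I s t P G \<longleftrightarrow>
     GQ Pts Lns I s t \<and> P \<in> Pts \<and> aut_group Pts Lns I G \<and>
     (\<forall>\<phi>\<in>G. elation Pts Lns I P \<phi>) \<and>
     (\<forall>x\<in>Pts. \<forall>y\<in>Pts. \<not> collinear I Lns P x \<longrightarrow> \<not> collinear I Lns P y \<longrightarrow>
        (\<exists>!\<phi>. \<phi> \<in> G \<and> fst \<phi> x = y))"

definition lines_through :: "'l set \<Rightarrow> ('p \<Rightarrow> 'l \<Rightarrow> bool) \<Rightarrow> 'p \<Rightarrow> 'l set" where
  "lines_through Lns I y = {M\<in>Lns. I y M}"

definition proj_pt :: "'p set \<Rightarrow> 'l set \<Rightarrow> ('p \<Rightarrow> 'l \<Rightarrow> bool) \<Rightarrow> 'p \<Rightarrow> 'l \<Rightarrow> 'p" where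
  "proj_pt Pts Lns I P M = (THE z. z \<in> Pts \<and> I z M \<and> collinear I Lns P z)"

definition line_stab :: "('p,'l) aut set \<Rightarrow> 'l \<Rightarrow> ('p,'l) aut set" where
  "line_stab G M = {\<phi>\<in>G. snd \<phi> M = M}"

definition point_stab :: "('p,'l) aut set \<Rightarrow> 'p \<Rightarrow> ('p,'l) aut set" where
  "point_stab G z = {\<phi>\<in>G. fst \<phi> z = z}"

definition linear_character :: "('p,'l) aut set \<Rightarrow> (('p,'l) aut \<Rightarrow> complex) \<Rightarrow> bool" where
  "linear_character G \<chi> \<longleftrightarrow>
     (\<forall>g\<in>G. \<chi> g \<noteq> 0) \<and> (\<forall>a\<in>G. \<forall>b\<in>G. \<chi> (aut_mult a b) = \<chi> a * \<chi> b)"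

definition char_ker :: "('p,'l) aut set \<Rightarrow> (('p,'l) aut \<Rightarrow> complex) \<Rightarrow> ('p,'l) aut set" where
  "char_ker G \<chi> = {g\<in>G. \<chi> g = \<chi> aut_one}"

end

theory Submission
  imports Defs
begin


lemma aut_mult_assoc: "aut_mult (aut_mult a b) c = aut_mult a (aut_mult b c)"
  by (simp add: aut_mult_def comp_assoc)
lemma fst_mult[simp]: "fst (aut_mult a b) = fst a \<circ> fst b" by (simp add: aut_mult_def)
lemma snd_mult[simp]: "snd (aut_mult a b) = snd a \<circ> snd b" by (simp add: aut_mult_def)
lemma fst_one[simp]: "fst aut_one = id" by (simp add: aut_one_def)
lemma snd_one[simp]: "snd aut_one = id" by (simp add: aut_one_def)
lemma one_mult[simp]: "aut_mult aut_one a = a" by (simp add: aut_mult_def aut_one_def)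
lemma one_one[simp]: "aut_mult aut_one aut_one = aut_one" by simp

lemma coll_sym: "collinear I Lns x z \<Longrightarrow> collinear I Lns z x"
  by (auto simp: collinear_def)
lemma coll_line: "l \<in> Lns \<Longrightarrow> I x l \<Longrightarrow> I z l \<Longrightarrow> collinear I Lns x z"
  by (auto simp: collinear_def)

locale egq =
  fixes Pts :: "'p set" and Lns :: "'l set" and I :: "'p \<Rightarrow> 'l \<Rightarrow> bool"
    and s t :: nat and P y :: 'p and G :: "('p,'l) aut set"
  assumes fP: "finite Pts" and fL: "finite Lns" and E: "elation_GQ Pts Lns I s t P G"
    and yP: "y \<in> Pts" and yO: "\<not> collinear I Lns P y"
begin

abbreviation coll where "coll \<equiv> collinear I Lns"

lemma GQ: "GQ Pts Lns I s t" using E by (simp add: elation_GQ_def)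
lemma s1: "s \<ge> 1" using GQ by (simp add: GQ_def)
lemma t1: "t \<ge> 1" using GQ by (simp add: GQ_def)
lemma line_card: "l \<in> Lns \<Longrightarrow> card {x\<in>Pts. I x l} = s+1" using GQ by (simp add: GQ_def)
lemma pt_card: "x \<in> Pts \<Longrightarrow> card {l\<in>Lns. I x l} = t+1" using GQ by (simp add: GQ_def)
lemma two_lines: "\<lbrakk>x\<in>Pts; z\<in>Pts; l\<in>Lns; m\<in>Lns; x\<noteq>z; I x l; I z l; I x m; I z m\<rbrakk> \<Longrightarrow> l = m"
  using GQ unfolding GQ_def by blast
lemma proj_ex1: "\<lbrakk>x\<in>Pts; l\<in>Lns; \<not> I x l\<rbrakk> \<Longrightarrow> \<exists>!z. z\<in>Pts \<and> I z l \<and> coll x z"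
  using GQ unfolding GQ_def by blast
lemma proj_uniq: "\<lbrakk>x\<in>Pts; l\<in>Lns; \<not> I x l; z1\<in>Pts; I z1 l; coll x z1; z2 \<in> Pts; I z2 l; coll x z2\<rbrakk> \<Longrightarrow> z1 = z2"
  using proj_ex1 by blast
lemma PP: "P \<in> Pts" using E by (simp add: elation_GQ_def)
lemma aut_group: "aut_group Pts Lns I G" using E by (simp add: elation_GQ_def)
lemma one_G: "aut_one \<in> G" using aut_group by (simp add: aut_group_def)
lemma mult_G: "a \<in> G \<Longrightarrow> b \<in> G \<Longrightarrow> aut_mult a b \<in> G" using aut_group by (simp add: aut_group_def)
lemma inv_G: "a \<in> G \<Longrightarrow> \<exists>b\<in>G. aut_mult a b = aut_one \<and> aut_mult b a = aut_one"
  using aut_group by (simp add: aut_group_def)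
lemma Gaut: "g\<in>G \<Longrightarrow> automorphism Pts Lns I g" using aut_group by (simp add: aut_group_def)
lemma G_pt: "g\<in>G \<Longrightarrow> x\<in>Pts \<Longrightarrow> fst g x \<in> Pts"
  using Gaut unfolding automorphism_def by (meson bij_betw_apply)
lemma G_ln: "g\<in>G \<Longrightarrow> l\<in>Lns \<Longrightarrow> snd g l \<in> Lns"
  using Gaut unfolding automorphism_def by (meson bij_betw_apply)
lemma G_I: "g\<in>G \<Longrightarrow> x\<in>Pts \<Longrightarrow> l\<in>Lns \<Longrightarrow> I (fst g x) (snd g l) = I x l"
  using Gaut unfolding automorphism_def by blast
lemma G_ln_surj: "g\<in>G \<Longrightarrow> m\<in>Lns \<Longrightarrow> \<exists>l\<in>Lns. snd g l = m"
  using Gaut unfolding automorphism_def bij_betw_def by (metis imageE)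
lemma G_coll: assumes "g\<in>G" "x\<in>Pts" "z\<in>Pts" shows "coll (fst g x) (fst g z) = coll x z"
proof
  assume "coll (fst g x) (fst g z)"
  then obtain m where m: "m \<in> Lns" "I (fst g x) m" "I (fst g z) m" by (auto simp: collinear_def)
  then obtain l where l: "l \<in> Lns" "snd g l = m" using G_ln_surj assms by blast
  show "coll x z" using m l G_I assms coll_line by metis
next
  assume "coll x z"
  then obtain l where "l \<in> Lns" "I x l" "I z l" by (auto simp: collinear_def)
  then show "coll (fst g x) (fst g z)" using G_I G_ln assms coll_line by metis
qed

lemma G_fix_lines: "g\<in>G \<Longrightarrow> l\<in>Lns \<Longrightarrow> I P l \<Longrightarrow> snd g l = l"
  using E unfolding elation_GQ_def elation_def by (auto simp: aut_one_def)

lemma two_P_lines: obtains l1 l2 where "l1 \<in> Lns" "l2 \<in> Lns" "I P l1" "I P l2" "l1 \<noteq> l2"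
proof -
  let ?S = "{l\<in>Lns. I P l}"
  have c: "card ?S = t+1" using pt_card PP by simp
  have "?S \<noteq> {}"
  proof
    assume "?S = {}" then have "card ?S = 0" by (metis card.empty)
    with c show False by simp
  qed
  then obtain l1 where l1: "l1 \<in> ?S" by auto
  have "card (?S - {l1}) = t" using c l1 by (simp add: card_Diff_singleton)
  then have "?S - {l1} \<noteq> {}" using t1 by (metis card.empty not_one_le_zero)
  then obtain l2 where "l2 \<in> ?S - {l1}" by auto
  then show ?thesis using that l1 by auto
qed

lemma G_P: assumes "g\<in>G" shows "fst g P = P"
proof -
  obtain l1 l2 where l: "l1 \<in> Lns" "l2 \<in> Lns" "I P l1" "I P l2" "l1 \<noteq> l2" by (rule two_P_lines)
  have "I (fst g P) l1" "I (fst g P) l2" using G_I G_fix_lines assms l PP by metis+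
  then show ?thesis using two_lines[of "fst g P" P l1 l2] l G_pt[OF assms PP] PP by blast
qed

lemma G_O: "g\<in>G \<Longrightarrow> x\<in>Pts \<Longrightarrow> \<not>coll P x \<Longrightarrow> \<not>coll P (fst g x)"
  using G_coll[of g P x] G_P PP by simp

lemma reg: "x\<in>Pts \<Longrightarrow> \<not>coll P x \<Longrightarrow> \<exists>!g. g\<in>G \<and> fst g y = x"
  using E yP yO unfolding elation_GQ_def by blast

lemma reg_eq: assumes "g\<in>G" "h\<in>G" "fst g y = fst h y" shows "g = h"
proof -
  have "fst g y \<in> Pts" "\<not> coll P (fst g y)" using G_pt G_O assms yP yO by auto
  from reg[OF this] show ?thesis
  proof (rule ex1E)
    fix g0 assume "g0\<in>G \<and> fst g0 y = fst g y" "\<forall>g'. g'\<in>G \<and> fst g' y = fst g y \<longrightarrow> g' = g0"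
    then show "g = h" using assms by metis
  qed
qed

lemma fin_G: "finite G"
proof -
  have "inj_on (\<lambda>g. fst g y) G" using reg_eq by (auto simp: inj_on_def)
  moreover have "(\<lambda>g. fst g y) ` G \<subseteq> Pts" using G_pt yP by auto
  ultimately show ?thesis using fP finite_imageD finite_subset by blast
qed

lemma cancel: assumes "a\<in>G" "b\<in>G" "c\<in>G" "aut_mult a b = aut_mult a c" shows "b = c"
proof -
  obtain a' where "a'\<in>G" "aut_mult a' a = aut_one" using inv_G assms by blast
  then show ?thesis using assms(4) by (metis aut_mult_assoc one_mult)
qed

end



context egq begin

abbreviation Ly where "Ly \<equiv> lines_through Lns I y"
abbreviation zp where "zp M \<equiv> proj_pt Pts Lns I P M"

lemma cl: "l\<in>Lns \<Longrightarrow> I x l \<Longrightarrow> I z l \<Longrightarrow> coll x z" by (rule coll_line)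
lemma reg_ex: "x\<in>Pts \<Longrightarrow> \<not>coll P x \<Longrightarrow> \<exists>g\<in>G. fst g y = x"
  using reg by (metis ex1_implies_ex)

lemma Ly_iff: "M \<in> Ly \<longleftrightarrow> M \<in> Lns \<and> I y M" by (simp add: lines_through_def)
lemma fin_Ly: "finite Ly" using fL by (simp add: lines_through_def)
lemma card_Ly: "card Ly = t+1" using pt_card[OF yP] by (simp add: lines_through_def)

lemma G_inj: "g\<in>G \<Longrightarrow> x\<in>Pts \<Longrightarrow> z\<in>Pts \<Longrightarrow> fst g x = fst g z \<Longrightarrow> x = z"
  using Gaut unfolding automorphism_def bij_betw_def inj_on_def by blast
lemma G_inj_ln: "g\<in>G \<Longrightarrow> x\<in>Lns \<Longrightarrow> z\<in>Lns \<Longrightarrow> snd g x = snd g z \<Longrightarrow> x = z"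
  using Gaut unfolding automorphism_def bij_betw_def inj_on_def by blast

lemma Ly_notP: "M \<in> Ly \<Longrightarrow> \<not> I P M"
  using yO coll_line Ly_iff by metis

lemma zp: assumes "M \<in> Ly" shows "zp M \<in> Pts" "I (zp M) M" "coll P (zp M)"
proof -
  have "\<exists>!z. z\<in>Pts \<and> I z M \<and> coll P z" using proj_ex1[OF PP _ Ly_notP[OF assms]] assms Ly_iff by blast
  from theI'[OF this] show "zp M \<in> Pts" "I (zp M) M" "coll P (zp M)" unfolding proj_pt_def by auto
qed

lemma zp_uniq: "M\<in>Ly \<Longrightarrow> x\<in>Pts \<Longrightarrow> I x M \<Longrightarrow> coll P x \<Longrightarrow> x = zp M"
  using proj_uniq[OF PP _ Ly_notP] zp Ly_iff by metis

lemma zp_ne_P: "M\<in>Ly \<Longrightarrow> zp M \<noteq> P" using zp Ly_notP by metis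

lemma zp_y: "M\<in>Ly \<Longrightarrow> coll y (zp M)" using zp coll_line Ly_iff by metis

lemma zp_L: assumes "M\<in>Ly" obtains L where "L\<in>Lns" "I P L" "I (zp M) L"
  using zp(3)[OF assms] unfolding collinear_def by blast

lemma O_not_zp: "M\<in>Ly \<Longrightarrow> \<not> coll P x \<Longrightarrow> x \<noteq> zp M" using zp by metis

lemma fix_z: assumes M: "M\<in>Ly" and g: "g\<in>G" and c: "coll (fst g y) (zp M)"
  shows "fst g (zp M) = zp M"
proof -
  obtain L where L: "L\<in>Lns" "I P L" "I (zp M) L" using zp_L[OF M] by blast
  let ?x = "fst g y"
  have x: "?x \<in> Pts" "\<not> coll P ?x" using G_pt G_O g yP yO by auto
  have nL: "\<not> I ?x L" using x L coll_line by metis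
  have gL: "snd g L = L" using G_fix_lines g L by blast
  have i: "I (fst g (zp M)) L" using G_I[OF g zp(1)[OF M] L(1)] gL L by simp
  have "coll ?x (fst g (zp M))" using G_coll[OF g yP zp(1)[OF M]] zp_y[OF M] by simp
  then show ?thesis using proj_uniq[OF x(1) L(1) nL, of "fst g (zp M)" "zp M"] i L
      G_pt[OF g zp(1)[OF M]] zp(1)[OF M] c by blast
qed

lemma fix_M: assumes M: "M\<in>Ly" and g: "g\<in>G" and i: "I (fst g y) M"
  shows "snd g M = M"
proof -
  let ?x = "fst g y"
  have x: "?x \<in> Pts" "\<not> coll P ?x" using G_pt G_O g yP yO by auto
  have Mln: "M \<in> Lns" using M Ly_iff by blast
  have c: "coll ?x (zp M)" using cl[OF Mln i zp(2)[OF M]] .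
  have fz: "fst g (zp M) = zp M" using fix_z[OF M g c] .
  have "I (zp M) (snd g M)" using G_I[OF g zp(1)[OF M] Mln] fz zp(2)[OF M] by simp
  moreover have "I ?x (snd g M)" using G_I[OF g yP Mln] M Ly_iff by simp
  moreover have "?x \<noteq> zp M" using O_not_zp[OF M x(2)] .
  ultimately show ?thesis using two_lines[OF x(1) zp(1)[OF M] G_ln[OF g Mln] Mln] i zp(2)[OF M] by blast
qed

lemma A_fix_z: assumes M: "M\<in>Ly" and g: "g\<in>G" and gM: "snd g M = M"
  shows "fst g (zp M) = zp M"
proof -
  have Mln: "M \<in> Lns" using M Ly_iff by blast
  have "I (fst g y) M" using G_I[OF g yP Mln] gM M Ly_iff by simp
  then have "coll (fst g y) (zp M)" using cl[OF Mln _ zp(2)[OF M]] by blast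
  then show ?thesis using fix_z[OF M g] by blast
qed

lemma A_sub_Ast: "M\<in>Ly \<Longrightarrow> line_stab G M \<subseteq> point_stab G (zp M)"
  using A_fix_z by (auto simp: line_stab_def point_stab_def)

lemma bij_A: assumes M: "M\<in>Ly"
  shows "bij_betw (\<lambda>g. fst g y) (line_stab G M) ({x\<in>Pts. I x M} - {zp M})"
  unfolding bij_betw_def
proof
  show "inj_on (\<lambda>g. fst g y) (line_stab G M)" using reg_eq by (auto simp: inj_on_def line_stab_def)
  have Mln: "M \<in> Lns" using M Ly_iff by blast
  show "(\<lambda>g. fst g y) ` line_stab G M = {x\<in>Pts. I x M} - {zp M}"
  proof (intro equalityI subsetI)
    fix x assume "x \<in> (\<lambda>g. fst g y) ` line_stab G M"
    then obtain g where g: "g \<in> G" "snd g M = M" "x = fst g y" by (auto simp: line_stab_def)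
    have "I x M" using G_I[OF g(1) yP Mln] g M Ly_iff by simp
    moreover have "x \<in> Pts" using G_pt g yP by simp
    moreover have "x \<noteq> zp M" using O_not_zp[OF M] G_O[OF g(1) yP yO] g by simp
    ultimately show "x \<in> {x\<in>Pts. I x M} - {zp M}" by simp
  next
    fix x assume x: "x \<in> {x\<in>Pts. I x M} - {zp M}"
    then have "\<not> coll P x" using zp_uniq[OF M] by blast
    then obtain g where g: "g\<in>G" "fst g y = x" using reg_ex x by blast
    then have "snd g M = M" using fix_M[OF M] x by auto
    then show "x \<in> (\<lambda>g. fst g y) ` line_stab G M" using g by (auto simp: line_stab_def)
  qed
qed

lemma card_A: assumes M: "M\<in>Ly" shows "card (line_stab G M) = s"
proof -
  have Mln: "M \<in> Lns" using M Ly_iff by blast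
  have "card ({x\<in>Pts. I x M} - {zp M}) = s" using line_card[OF Mln] zp[OF M]
    by (simp add: card_Diff_singleton)
  then show ?thesis using bij_betw_same_card[OF bij_A[OF M]] by simp
qed

definition Zs where "Zs M = {x\<in>Pts. \<not> coll P x \<and> coll x (zp M)}"

lemma bij_Ast: assumes M: "M\<in>Ly"
  shows "bij_betw (\<lambda>g. fst g y) (point_stab G (zp M)) (Zs M)"
  unfolding bij_betw_def
proof
  show "inj_on (\<lambda>g. fst g y) (point_stab G (zp M))" using reg_eq by (auto simp: inj_on_def point_stab_def)
  show "(\<lambda>g. fst g y) ` point_stab G (zp M) = Zs M"
  proof (intro equalityI subsetI)
    fix x assume "x \<in> (\<lambda>g. fst g y) ` point_stab G (zp M)"
    then obtain g where g: "g \<in> G" "fst g (zp M) = zp M" "x = fst g y" by (auto simp: point_stab_def)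
    have "coll x (zp M)" using G_coll[OF g(1) yP zp(1)[OF M]] g zp_y[OF M] by simp
    then show "x \<in> Zs M" using G_pt G_O g yP yO by (auto simp: Zs_def)
  next
    fix x assume x: "x \<in> Zs M"
    have "x \<in> Pts" "\<not> coll P x" using x by (auto simp: Zs_def)
    then obtain g where g: "g\<in>G" "fst g y = x" using reg_ex by blast
    then have "fst g (zp M) = zp M" using fix_z[OF M] x by (auto simp: Zs_def)
    then show "x \<in> (\<lambda>g. fst g y) ` point_stab G (zp M)" using g by (auto simp: point_stab_def)
  qed
qed

lemma card_Zs: assumes M: "M\<in>Ly" shows "card (Zs M) = s * t"
proof -
  obtain L where L: "L\<in>Lns" "I P L" "I (zp M) L" using zp_L[OF M] by blast
  let ?z = "zp M"
  have zP: "?z \<in> Pts" using zp[OF M] by simp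
  let ?LL = "lines_through Lns I ?z - {L}"
  let ?B = "\<lambda>N. {v\<in>Pts. I v N} - {?z}"
  have eq: "Zs M = \<Union>(?B ` ?LL)"
  proof (intro equalityI subsetI)
    fix x assume x: "x \<in> Zs M"
    then obtain N where N: "N \<in> Lns" "I x N" "I ?z N" by (auto simp: Zs_def collinear_def)
    have xO: "\<not> coll P x" using x by (simp add: Zs_def)
    have "N \<noteq> L"
    proof
      assume "N = L" then have "coll P x" using cl[OF L(1) L(2)] N(2) by simp
      then show False using xO by simp
    qed
    moreover have "x \<noteq> ?z" using x O_not_zp[OF M] by (auto simp: Zs_def)
    ultimately show "x \<in> \<Union>(?B ` ?LL)" using x N by (auto simp: Zs_def lines_through_def)
  next
    fix v assume "v \<in> \<Union>(?B ` ?LL)"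
    then obtain N where N: "N \<in> Lns" "I ?z N" "N \<noteq> L" and v: "v \<in> Pts" "I v N" "v \<noteq> ?z"
      by (auto simp: lines_through_def)
    have c: "coll v ?z" using coll_line N v by metis
    have "\<not> coll P v"
    proof
      assume cP: "coll P v"
      have "\<not> I v L" using two_lines[OF v(1) zP N(1) L(1) v(3) v(2) N(2)] L N by blast
      then have "P = ?z" using proj_uniq[OF v(1) L(1) _ PP L(2) coll_sym[OF cP] zP L(3) c] by blast
      then show False using zp_ne_P[OF M] by simp
    qed
    then show "v \<in> Zs M" using v c by (simp add: Zs_def)
  qed
  have fin: "finite ?LL" using fL by (simp add: lines_through_def)
  have cLL: "card ?LL = t" using pt_card[OF zP] L by (simp add: lines_through_def card_Diff_singleton)
  have "card (\<Union>(?B ` ?LL)) = (\<Sum>N\<in>?LL. card (?B N))"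
  proof (rule card_UN_disjoint[OF fin])
    show "\<forall>i\<in>?LL. finite (?B i)" using fP by auto
    show "\<forall>i\<in>?LL. \<forall>j\<in>?LL. i \<noteq> j \<longrightarrow> ?B i \<inter> ?B j = {}"
      using two_lines zP by (auto simp: lines_through_def)
  qed
  also have "\<dots> = (\<Sum>N\<in>?LL. s)"
  proof (rule sum.cong[OF refl])
    fix N assume "N \<in> ?LL"
    then show "card (?B N) = s" using line_card zP by (simp add: lines_through_def card_Diff_singleton)
  qed
  finally show ?thesis using eq cLL by simp
qed

lemma card_Ast: "M\<in>Ly \<Longrightarrow> card (point_stab G (zp M)) = s * t"
  using bij_betw_same_card[OF bij_Ast] card_Zs by simp

end


declare split_paired_All[simp del] split_paired_Ex[simp del]


locale egqc = egq +
  fixes \<chi>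
  assumes lc: "linear_character G \<chi>" and np: "\<exists>g\<in>G. \<chi> g \<noteq> 1"
begin

abbreviation K where "K \<equiv> char_ker G \<chi>"

lemma chi_mult: "a\<in>G \<Longrightarrow> b\<in>G \<Longrightarrow> \<chi> (aut_mult a b) = \<chi> a * \<chi> b"
  using lc by (simp add: linear_character_def)

lemma chi1: "\<chi> aut_one = 1"
proof -
  have "\<chi> aut_one = \<chi> aut_one * \<chi> aut_one" using chi_mult[OF one_G one_G] by simp
  moreover have "\<chi> aut_one \<noteq> 0" using lc one_G by (simp add: linear_character_def)
  ultimately show ?thesis by (metis mult_cancel_left1)
qed

lemma sub_sum:
  assumes AG: "A \<subseteq> G" and cl: "\<forall>a\<in>A. \<forall>b\<in>A. aut_mult a b \<in> A"
  shows "(\<Sum>g\<in>A. \<chi> g) = (if A \<subseteq> K then of_nat (card A) else 0)"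
proof (cases "A \<subseteq> K")
  case True
  then have "\<forall>g\<in>A. \<chi> g = 1" using chi1 by (auto simp: char_ker_def)
  then show ?thesis using True by simp
next
  case False
  then obtain a where a: "a \<in> A" "\<chi> a \<noteq> 1" using AG chi1 by (auto simp: char_ker_def)
  have fA: "finite A" using fin_G AG finite_subset by blast
  have inj: "inj_on (aut_mult a) A"
  proof (rule inj_onI)
    fix u v assume "u\<in>A" "v\<in>A" "aut_mult a u = aut_mult a v"
    then show "u = v" using cancel[of a u v] a AG by blast
  qed
  have sub: "aut_mult a ` A \<subseteq> A" using cl a by auto
  have img: "aut_mult a ` A = A"
    using card_subset_eq[OF fA sub] card_image[OF inj] by simp
  have "(\<Sum>g\<in>A. \<chi> g) = (\<Sum>g\<in>aut_mult a ` A. \<chi> g)" using img by simp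
  also have "\<dots> = (\<Sum>g\<in>A. \<chi> (aut_mult a g))" using sum.reindex[OF inj] by simp
  also have "\<dots> = (\<Sum>g\<in>A. \<chi> a * \<chi> g)" using chi_mult a AG by (intro sum.cong[OF refl]) blast
  also have "\<dots> = \<chi> a * (\<Sum>g\<in>A. \<chi> g)" by (simp add: sum_distrib_left)
  finally have "(1 - \<chi> a) * (\<Sum>g\<in>A. \<chi> g) = 0" by (simp add: algebra_simps)
  then show ?thesis using a False by simp
qed

lemma sum_G: "(\<Sum>g\<in>G. \<chi> g) = 0"
proof -
  have "\<not> G \<subseteq> K" using np chi1 by (auto simp: char_ker_def)
  then show ?thesis using sub_sum[of G] mult_G by auto
qed

lemma sum_A: "M\<in>Ly \<Longrightarrow> (\<Sum>g\<in>line_stab G M. \<chi> g) = (if line_stab G M \<subseteq> K then of_nat s else 0)"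
  using sub_sum[of "line_stab G M"] card_A mult_G by (auto simp: line_stab_def)

lemma sum_Ast: "M\<in>Ly \<Longrightarrow> (\<Sum>g\<in>point_stab G (zp M). \<chi> g) = (if point_stab G (zp M) \<subseteq> K then of_nat s * of_nat t else 0)"
  using sub_sum[of "point_stab G (zp M)"] card_Ast mult_G by (auto simp: point_stab_def)

end



context egqc begin

definition Sig where "Sig M0 = (SIGMA a:line_stab G M0. SIGMA N:(Ly - {M0}). line_stab G N - {aut_one})"
definition ff where "ff p = aut_mult (fst p) (snd (snd p))"

lemma dec_geom:
  assumes M0: "M0\<in>Ly" and a: "a \<in> line_stab G M0" and N: "N \<in> Ly - {M0}" and b: "b \<in> line_stab G N - {aut_one}"
  shows "fst a (fst b y) \<in> Pts \<and> \<not> I (fst a (fst b y)) M0 \<and> coll (fst a (fst b y)) (fst a y)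
         \<and> fst a y \<in> Pts \<and> I (fst a y) M0 \<and> \<not> coll (fst a (fst b y)) (zp M0)"
proof -
  have aG: "a\<in>G" "snd a M0 = M0" using a by (auto simp: line_stab_def)
  have bG: "b\<in>G" "snd b N = N" "b \<noteq> aut_one" using b by (auto simp: line_stab_def)
  have NL: "N\<in>Lns" "I y N" "N \<noteq> M0" using N Ly_iff by auto
  have M0L: "M0\<in>Lns" "I y M0" using M0 Ly_iff by auto
  define v where "v = fst b y"
  have v: "v\<in>Pts" "I v N" using G_pt[OF bG(1) yP] G_I[OF bG(1) yP NL(1)] bG NL by (auto simp: v_def)
  have vy: "v \<noteq> y"
  proof
    assume "v = y" then have "fst b y = fst aut_one y" by (simp add: v_def)
    then have "b = aut_one" using reg_eq[OF bG(1) one_G] by blast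
    then show False using bG by simp
  qed
  define x where "x = fst a v"
  define w where "w = fst a y"
  have xw: "x\<in>Pts" "w\<in>Pts" using G_pt aG v yP by (auto simp: x_def w_def)
  have aN: "snd a N \<in> Lns" using G_ln aG NL by blast
  have i1: "I x (snd a N)" "I w (snd a N)" using G_I[OF aG(1) v(1) NL(1)] G_I[OF aG(1) yP NL(1)] v NL
    by (auto simp: x_def w_def)
  have cxw: "coll x w" using cl[OF aN i1] .
  have iw: "I w M0" using G_I[OF aG(1) yP M0L(1)] aG M0L by (simp add: w_def)
  have xnw: "x \<noteq> w" using G_inj[OF aG(1) v(1) yP] vy by (auto simp: x_def w_def)
  have nI: "\<not> I x M0"
  proof
    assume "I x M0"
    then have "snd a N = M0" using two_lines[OF xw aN M0L(1) xnw i1 _ iw] by blast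
    then have "snd a N = snd a M0" using aG by simp
    then have "N = M0" using G_inj_ln[OF aG(1) NL(1) M0L(1)] by blast
    then show False using NL by simp
  qed
  have wz: "w \<noteq> zp M0" using O_not_zp[OF M0 G_O[OF aG(1) yP yO]] by (simp add: w_def)
  have nc: "\<not> coll x (zp M0)"
  proof
    assume "coll x (zp M0)"
    then have "w = zp M0" using proj_uniq[OF xw(1) M0L(1) nI xw(2) iw cxw] zp[OF M0] by blast
    then show False using wz by simp
  qed
  show ?thesis using xw nI cxw iw nc by (simp add: x_def w_def v_def)
qed

lemma Sig_mem: "p \<in> Sig M0 \<longleftrightarrow> fst p \<in> line_stab G M0 \<and> fst (snd p) \<in> Ly - {M0}
   \<and> snd (snd p) \<in> line_stab G (fst (snd p)) - {aut_one}"
  by (cases p) (auto simp: Sig_def)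

lemma ff_G: "p \<in> Sig M0 \<Longrightarrow> ff p \<in> G"
  using mult_G by (auto simp: Sig_mem ff_def line_stab_def)

lemma ff_y: "fst (ff p) y = fst (fst p) (fst (snd (snd p)) y)" by (simp add: ff_def)

lemma dec_inj: assumes M0: "M0\<in>Ly" shows "inj_on ff (Sig M0)"
proof (rule inj_onI)
  fix p q assume p: "p \<in> Sig M0" and q: "q \<in> Sig M0" and e: "ff p = ff q"
  obtain a N b where pp: "p = (a,N,b)" by (cases p) blast
  obtain a' N' b' where qq: "q = (a',N',b')" by (cases q) blast
  have pa: "a \<in> line_stab G M0" "N \<in> Ly - {M0}" "b \<in> line_stab G N - {aut_one}" using p pp by (auto simp: Sig_def)
  have qa: "a' \<in> line_stab G M0" "N' \<in> Ly - {M0}" "b' \<in> line_stab G N' - {aut_one}" using q qq by (auto simp: Sig_def)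
  have gp: "fst a (fst b y) \<in> Pts \<and> \<not> I (fst a (fst b y)) M0 \<and> coll (fst a (fst b y)) (fst a y)
         \<and> fst a y \<in> Pts \<and> I (fst a y) M0 \<and> \<not> coll (fst a (fst b y)) (zp M0)" using dec_geom[OF M0 pa] .
  have gq: "fst a' (fst b' y) \<in> Pts \<and> \<not> I (fst a' (fst b' y)) M0 \<and> coll (fst a' (fst b' y)) (fst a' y)
         \<and> fst a' y \<in> Pts \<and> I (fst a' y) M0 \<and> \<not> coll (fst a' (fst b' y)) (zp M0)" using dec_geom[OF M0 qa] .
  have xe: "fst a (fst b y) = fst a' (fst b' y)"
  proof -
    have "fst (ff p) y = fst (ff q) y" using e by simp
    then show ?thesis using pp qq by (simp add: ff_def)
  qed
  have M0L: "M0 \<in> Lns" using M0 Ly_iff by blast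
  have "fst a y = fst a' y" using proj_uniq[of "fst a (fst b y)" M0 "fst a y" "fst a' y"] gp gq xe M0L by metis
  then have aa: "a = a'" using reg_eq pa qa by (auto simp: line_stab_def)
  have bb: "b = b'" using cancel[of a b b'] e pp qq aa pa qa by (auto simp: ff_def line_stab_def)
  have "N = N'"
  proof (rule ccontr)
    assume nn: "N \<noteq> N'"
    have bG: "b \<in> G" "snd b N = N" "snd b N' = N'" "b \<noteq> aut_one" using pa qa bb by (auto simp: line_stab_def)
    have NL: "N \<in> Lns" "I y N" "N' \<in> Lns" "I y N'" using pa qa Ly_iff by auto
    have "I (fst b y) N" "I (fst b y) N'" using G_I[OF bG(1) yP NL(1)] G_I[OF bG(1) yP NL(3)] bG NL by auto
    then have "fst b y = y" using two_lines[OF G_pt[OF bG(1) yP] yP NL(1) NL(3)] NL nn by blast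
    then have "b = aut_one" using reg_eq[OF bG(1) one_G] by simp
    then show False using bG by simp
  qed
  then show "p = q" using pp qq aa bb by simp
qed

lemma dec_disj: assumes M0: "M0\<in>Ly" shows "point_stab G (zp M0) \<inter> ff ` Sig M0 = {}"
proof -
  { fix p assume p: "p \<in> Sig M0" and fz: "fst (ff p) (zp M0) = zp M0"
    obtain a N b where pp: "p = (a,N,b)" by (cases p) blast
    have pa: "a \<in> line_stab G M0" "N \<in> Ly - {M0}" "b \<in> line_stab G N - {aut_one}" using p pp by (auto simp: Sig_def)
    have "coll (fst (ff p) y) (zp M0)" using G_coll[OF ff_G[OF p] yP zp(1)[OF M0]] fz zp_y[OF M0] by simp
    then have False using dec_geom[OF M0 pa] pp by (simp add: ff_def) }
  then show ?thesis by (auto simp: point_stab_def)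
qed

lemma dec_cover: assumes M0: "M0\<in>Ly" shows "G = point_stab G (zp M0) \<union> ff ` Sig M0"
proof (intro equalityI subsetI)
  fix g assume g: "g \<in> point_stab G (zp M0) \<union> ff ` Sig M0"
  then show "g \<in> G" using ff_G by (auto simp: point_stab_def)
next
  fix g assume gG: "g \<in> G"
  show "g \<in> point_stab G (zp M0) \<union> ff ` Sig M0"
  proof (cases "coll (fst g y) (zp M0)")
    case True
    then show ?thesis using fix_z[OF M0 gG] gG by (simp add: point_stab_def)
  next
    case False
    let ?x = "fst g y"
    have x: "?x \<in> Pts" "\<not> coll P ?x" using G_pt G_O gG yP yO by auto
    have M0L: "M0 \<in> Lns" using M0 Ly_iff by blast
    have nI: "\<not> I ?x M0" using False cl[OF M0L _ zp(2)[OF M0]] by blast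
    obtain w where w: "w\<in>Pts" "I w M0" "coll ?x w" using proj_ex1[OF x(1) M0L nI] by blast
    have wz: "w \<noteq> zp M0" using w False by blast
    have wO: "\<not> coll P w" using zp_uniq[OF M0 w(1) w(2)] wz by blast
    obtain a where a: "a\<in>G" "fst a y = w" using reg_ex[OF w(1) wO] by blast
    have aM: "snd a M0 = M0" using fix_M[OF M0 a(1)] a w by simp
    obtain a' where a': "a'\<in>G" "aut_mult a a' = aut_one" "aut_mult a' a = aut_one" using inv_G[OF a(1)] by blast
    define b where "b = aut_mult a' g"
    have bG: "b \<in> G" using mult_G a' gG by (simp add: b_def)
    have gab: "g = aut_mult a b" using a' by (simp add: b_def aut_mult_assoc[symmetric])
    obtain N' where N': "N'\<in>Lns" "I ?x N'" "I w N'" using w(3) by (auto simp: collinear_def)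
    define N where "N = snd a' N'"
    have NL: "N \<in> Lns" using G_ln a' N' by (simp add: N_def)
    have a'w: "fst a' w = y"
    proof -
      have "fst a' w = fst (aut_mult a' a) y" using a by simp
      then show ?thesis using a' by simp
    qed
    have yN: "I y N" using G_I[OF a'(1) w(1) N'(1)] N' a'w by (simp add: N_def)
    have NLy: "N \<in> Ly" using NL yN Ly_iff by blast
    have NM0: "N \<noteq> M0"
    proof
      assume "N = M0"
      then have "snd a (snd a' N') = snd a M0" by (simp add: N_def)
      then have "snd (aut_mult a a') N' = M0" using aM by simp
      then have "N' = M0" using a' by simp
      then show False using N' nI by simp
    qed
    have bN: "I (fst b y) N" using G_I[OF a'(1) x(1) N'(1)] N' by (simp add: N_def b_def)
    have bM: "snd b N = N" using fix_M[OF NLy bG bN] .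
    have b1: "b \<noteq> aut_one"
    proof
      assume "b = aut_one" then have "g = a" using gab by (simp add: aut_mult_def aut_one_def)
      then show False using nI a w by simp
    qed
    have "(a, N, b) \<in> Sig M0" using a aM NLy NM0 bG bM b1 by (simp add: Sig_def line_stab_def)
    moreover have "g = ff (a, N, b)" using gab by (simp add: ff_def)
    ultimately show ?thesis by blast
  qed
qed

lemma fin_Sig: "finite (Sig M0)"
proof -
  have "Sig M0 \<subseteq> G \<times> Ly \<times> G" by (auto simp: Sig_def line_stab_def)
  then show ?thesis using fin_G fin_Ly finite_subset by blast
qed

lemma dec_sum: assumes M0: "M0\<in>Ly"
  shows "0 = (\<Sum>g\<in>point_stab G (zp M0). \<chi> g)
     + (\<Sum>a\<in>line_stab G M0. \<chi> a) * (\<Sum>N\<in>Ly - {M0}. \<Sum>b\<in>line_stab G N - {aut_one}. \<chi> b)"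
proof -
  have fA: "finite (point_stab G (zp M0))" using fin_G by (simp add: point_stab_def)
  have fS: "finite (ff ` Sig M0)" using fin_Sig by simp
  have fL: "\<And>M. finite (line_stab G M)" using fin_G by (simp add: line_stab_def)
  have "0 = (\<Sum>g\<in>G. \<chi> g)" using sum_G by simp
  also have "\<dots> = (\<Sum>g\<in>point_stab G (zp M0). \<chi> g) + (\<Sum>g\<in>ff ` Sig M0. \<chi> g)"
    using dec_cover[OF M0] sum.union_disjoint[OF fA fS dec_disj[OF M0]] by simp
  also have "(\<Sum>g\<in>ff ` Sig M0. \<chi> g) = (\<Sum>p\<in>Sig M0. \<chi> (ff p))"
    using sum.reindex[OF dec_inj[OF M0]] by simp
  also have "\<dots> = (\<Sum>p\<in>Sig M0. \<chi> (fst p) * \<chi> (snd (snd p)))"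
  proof (rule sum.cong[OF refl])
    fix p assume "p \<in> Sig M0"
    then show "\<chi> (ff p) = \<chi> (fst p) * \<chi> (snd (snd p))"
      using chi_mult by (auto simp: Sig_mem ff_def line_stab_def)
  qed
  also have "\<dots> = (\<Sum>a\<in>line_stab G M0. \<Sum>N\<in>Ly - {M0}. \<Sum>b\<in>line_stab G N - {aut_one}. \<chi> a * \<chi> b)"
  proof -
    let ?A = "line_stab G M0"
    let ?B = "Ly - {M0}"
    let ?C = "\<lambda>N. line_stab G N - {aut_one}"
    have f2: "finite (SIGMA N:?B. ?C N)" using fL fin_Ly by auto
    have "(\<Sum>p\<in>Sig M0. \<chi> (fst p) * \<chi> (snd (snd p))) = (\<Sum>a\<in>?A. \<Sum>q\<in>(SIGMA N:?B. ?C N). \<chi> a * \<chi> (snd q))"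
      unfolding Sig_def using sum.Sigma[of ?A "\<lambda>_. SIGMA N:?B. ?C N" "\<lambda>a q. \<chi> a * \<chi> (snd q)", unfolded split_def] fL f2
      by simp
    also have "\<dots> = (\<Sum>a\<in>?A. \<Sum>N\<in>?B. \<Sum>b\<in>?C N. \<chi> a * \<chi> b)"
    proof (rule sum.cong[OF refl])
      fix a
      show "(\<Sum>q\<in>(SIGMA N:?B. ?C N). \<chi> a * \<chi> (snd q)) = (\<Sum>N\<in>?B. \<Sum>b\<in>?C N. \<chi> a * \<chi> b)"
        using sum.Sigma[of ?B ?C "\<lambda>N b. \<chi> a * \<chi> b", unfolded split_def] fL fin_Ly by simp
    qed
    finally show ?thesis .
  qed
  also have "\<dots> = (\<Sum>a\<in>line_stab G M0. \<chi> a * (\<Sum>N\<in>Ly - {M0}. \<Sum>b\<in>line_stab G N - {aut_one}. \<chi> b))"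
    by (simp add: sum_distrib_left)
  also have "\<dots> = (\<Sum>a\<in>line_stab G M0. \<chi> a) * (\<Sum>N\<in>Ly - {M0}. \<Sum>b\<in>line_stab G N - {aut_one}. \<chi> b)"
    by (rule sum_distrib_right[symmetric])
  finally show ?thesis .
qed

end



context egqc begin

abbreviation U where "U \<equiv> {M \<in> Ly. line_stab G M \<subseteq> K}"
abbreviation U' where "U' \<equiv> {M \<in> Ly. point_stab G (zp M) \<subseteq> K}"

lemma one_A: "aut_one \<in> line_stab G M" using one_G by (simp add: line_stab_def)
lemma one_Ast: "aut_one \<in> point_stab G z" using one_G by (simp add: point_stab_def)

lemma inner_A: "M\<in>Ly \<Longrightarrow> (\<Sum>g\<in>line_stab G M - {aut_one}. \<chi> g) = (if line_stab G M \<subseteq> K then of_nat s else 0) - 1"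
  using sum_diff1[of "line_stab G M" \<chi> aut_one] fin_G one_A chi1 sum_A by (simp add: line_stab_def)

lemma inner_Ast: "M\<in>Ly \<Longrightarrow> (\<Sum>g\<in>point_stab G (zp M) - {aut_one}. \<chi> g) = (if point_stab G (zp M) \<subseteq> K then of_nat s * of_nat t else 0) - 1"
  using sum_diff1[of "point_stab G (zp M)" \<chi> aut_one] fin_G one_Ast chi1 sum_Ast by (simp add: point_stab_def)

lemma claim1: "(\<Sum>M\<in>Ly. \<Sum>g\<in>line_stab G M - {aut_one}. \<chi> g) = of_nat s * of_nat (card U) - of_nat t - 1"
proof -
  have "(\<Sum>M\<in>Ly. \<Sum>g\<in>line_stab G M - {aut_one}. \<chi> g) = (\<Sum>M\<in>Ly. (if line_stab G M \<subseteq> K then of_nat s else 0) - 1)"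
    using inner_A by (intro sum.cong) auto
  also have "\<dots> = (\<Sum>M\<in>Ly. (if line_stab G M \<subseteq> K then of_nat s else 0)) - of_nat (card Ly)"
    by (simp add: sum_subtractf)
  also have "(\<Sum>M\<in>Ly. (if line_stab G M \<subseteq> K then (of_nat s::complex) else 0)) = (\<Sum>M\<in>U. of_nat s)"
    by (rule sum.inter_filter[OF fin_Ly, symmetric])
  finally show ?thesis using card_Ly by (simp add: mult.commute)
qed

lemma claim2: "(\<Sum>M\<in>Ly. \<Sum>g\<in>point_stab G (zp M) - {aut_one}. \<chi> g) = of_nat s * of_nat t * of_nat (card U') - of_nat t - 1"
proof -
  have "(\<Sum>M\<in>Ly. \<Sum>g\<in>point_stab G (zp M) - {aut_one}. \<chi> g) = (\<Sum>M\<in>Ly. (if point_stab G (zp M) \<subseteq> K then of_nat s * of_nat t else 0) - 1)"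
    using inner_Ast by (intro sum.cong) auto
  also have "\<dots> = (\<Sum>M\<in>Ly. (if point_stab G (zp M) \<subseteq> K then of_nat s * of_nat t else 0)) - of_nat (card Ly)"
    by (simp add: sum_subtractf)
  also have "(\<Sum>M\<in>Ly. (if point_stab G (zp M) \<subseteq> K then (of_nat s * of_nat t::complex) else 0)) = (\<Sum>M\<in>U'. of_nat s * of_nat t)"
    by (rule sum.inter_filter[OF fin_Ly, symmetric])
  finally show ?thesis using card_Ly by (simp add: mult.commute)
qed

lemma rel: assumes M0: "M0 \<in> Ly" and MU: "M0 \<in> U"
  shows "0 = (if M0 \<in> U' then of_nat s * of_nat t else 0) + of_nat s * (of_nat s * of_nat (card U) - of_nat t - of_nat s :: complex)"
proof -
  have fA: "finite (line_stab G M)" for M using fin_G by (simp add: line_stab_def)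
  have "(\<Sum>N\<in>Ly - {M0}. \<Sum>b\<in>line_stab G N - {aut_one}. \<chi> b)
      = (\<Sum>N\<in>Ly. \<Sum>b\<in>line_stab G N - {aut_one}. \<chi> b) - (\<Sum>b\<in>line_stab G M0 - {aut_one}. \<chi> b)"
    using sum_diff1[OF fin_Ly, of "\<lambda>N. \<Sum>b\<in>line_stab G N - {aut_one}. \<chi> b" M0] M0 by simp
  also have "\<dots> = of_nat s * of_nat (card U) - of_nat t - of_nat s"
    using claim1 inner_A[OF M0] MU by simp
  finally have e: "(\<Sum>N\<in>Ly - {M0}. \<Sum>b\<in>line_stab G N - {aut_one}. \<chi> b) = of_nat s * of_nat (card U) - of_nat t - of_nat s" .
  show ?thesis using dec_sum[OF M0] e sum_A[OF M0] sum_Ast[OF M0] MU by simp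
qed

lemma keyA: assumes "M0 \<in> U" "M0 \<in> U'" shows "s * card U = s"
proof -
  have "0 = of_nat s * (of_nat s * of_nat (card U) - of_nat s :: complex)"
    using rel[of M0] assms by (simp add: algebra_simps)
  then have "of_nat (s * card U) = (of_nat s :: complex)" using s1 by simp
  then show ?thesis using of_nat_eq_iff by blast
qed

lemma keyB: assumes "M0 \<in> U" "M0 \<notin> U'" shows "s * card U = s + t"
proof -
  have "0 = of_nat s * (of_nat s * of_nat (card U) - of_nat t - of_nat s :: complex)"
    using rel[of M0] assms by simp
  then have "of_nat s * of_nat (card U) - of_nat t - of_nat s = (0 :: complex)" using s1 by simp
  then have "of_nat (s * card U) = (of_nat (s + t) :: complex)" by (simp add: algebra_simps)
  then show ?thesis using of_nat_eq_iff by blast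
qed

lemma U'U: "U' \<subseteq> U" using A_sub_Ast by blast

lemma claim3: "(real (card U), real (card U')) \<in> {(1, 1), (0, 0), (real t / real s + 1, 0)}"
proof (cases "U' = {}")
  case False
  then obtain M where M: "M \<in> U'" by blast
  then have MU: "M \<in> U" using U'U by blast
  have "s * card U = s" using keyA[OF MU M] .
  then have c1: "card U = 1" using s1 by simp
  have fU: "finite U" using fin_Ly by simp
  have "U = {M}" using c1 MU fU by (metis card_1_singletonE singletonD)
  then have "U' = {M}" using U'U M by blast
  then have "card U' = 1" by (metis is_singleton_altdef is_singleton_def)
  then show ?thesis using c1 by simp
next
  case True
  show ?thesis
  proof (cases "U = {}")
    case True
    have "card U = 0" "card U' = 0" using True \<open>U' = {}\<close> by (metis card.empty)+
    then show ?thesis by simp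
  next
    case False
    then obtain M where M: "M \<in> U" by blast
    have "M \<notin> U'" using True by blast
    then have "s * card U = s + t" using keyB[OF M] by blast
    then have "real s * real (card U) = real s + real t" by (metis of_nat_add of_nat_mult)
    then have "real (card U) = real t / real s + 1" using s1 by (simp add: field_simps)
    moreover have "card U' = 0" using True by (metis card.empty)
    ultimately show ?thesis by simp
  qed
qed

end

theorem proposition2p4:
  fixes Pts :: "'p set" and Lns :: "'l set" and I :: "'p \<Rightarrow> 'l \<Rightarrow> bool"
    and s t :: nat and P y :: 'p and G :: "('p,'l) aut set"
    and \<chi> :: "('p,'l) aut \<Rightarrow> complex"
  assumes "finite Pts" and "finite Lns"
    and "elation_GQ Pts Lns I s t P G"
    and "y \<in> Pts" and "\<not> collinear I Lns P y"
    and "linear_character G \<chi>" and "\<exists>g\<in>G. \<chi> g \<noteq> 1"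
  defines "u \<equiv> card {M \<in> lines_through Lns I y. line_stab G M \<subseteq> char_ker G \<chi>}"
    and "u' \<equiv> card {M \<in> lines_through Lns I y.
                      point_stab G (proj_pt Pts Lns I P M) \<subseteq> char_ker G \<chi>}"
  shows "(\<Sum>M\<in>lines_through Lns I y. \<Sum>g\<in>line_stab G M - {aut_one}. \<chi> g)
           = of_nat s * of_nat u - of_nat t - 1 \<and>
         (\<Sum>M\<in>lines_through Lns I y.
            \<Sum>g\<in>point_stab G (proj_pt Pts Lns I P M) - {aut_one}. \<chi> g)
           = of_nat s * of_nat t * of_nat u' - of_nat t - 1 \<and>
         (real u, real u') \<in> {(1, 1), (0, 0), (real t / real s + 1, 0)}"
proof -
  interpret egqc Pts Lns I s t P y G \<chi>
    by unfold_locales (use assms in auto)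
  show ?thesis unfolding u_def u'_def using claim1 claim2 claim3 by blast
qed

end
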